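(* Let $G$ be a graph and let $(G',L,\alpha,\beta)$ be constructed from $G$ as described in the context. If there exists an $L$-recoloring sequence for $G'$ from $\alpha$ to $\beta$ (of any length), then $G$ is 3-colorable.
   Context: A color list assignment $L$ gives each vertex a list $L(v)\subseteq[4]=\{1,2,3,4\}$. An $L$-coloring is a proper coloring $\gamma$ with $\gamma(v)\in L(v)$ for all $v$. $\mathcal{C}(G,L)$ is the graph on $L$-colorings, two adjacent iff they differ on exactly one vertex; an $L$-recoloring sequence of length $m$ is a sequence $\gamma_0,\ldots,\gamma_m$ of $L$-colorings with consecutive ones equal or adjacent in $\mathcal{C}(G,L)$. $(a,b)$-forbidding path: for $a,b\in[4]$, a path $P$ with lists $L(x)\subseteq[4]$ and end vertices $u,v$ is $(a,b)$-forbidding from $u$ to $v$ if (i) for all $x\in L(u)$, $y\in L(v)$, there is an $L$-coloring $\gamma$ of $P$ with $\gamma(u)=x,\gamma(v)=y$ iff $x\ne a$ or $y\ne b$ (such $(x,y)$ are called admissible); and (ii) for any $L$-coloring $\gamma$ of $P$ and any admissible $(x,y)$ with $x=\gamma(u)$ or $y=\gamma(v)$, there is an $L$-recoloring sequence of $P$ from $\gamma$ to an $L$-coloring $\delta$ with $\delta(u)=x,\delta(v)=y$ in which each internal vertex is recolored at most once and $u,v$ are not recolored until the last step. Such paths of length six exist whenever $L(u),L(v)\ne[4]$, $a\in L(u)$, $b\in L(v)$. Construction of $G'$: start with $V(G)$ (no edges among these), each $u\in V(G)$ with $L(u)=\{1,2,3\}$, $\alpha(u)=1$. For every edge $uv\in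 E(G)$ (with a fixed orientation $u,v$), add new vertices $x_{uv},y_{uv},z_{uv}$ with $\alpha$-value $4$ each and $L(x_{uv})=\{1,2,4\}$, $L(y_{uv})=\{3,4\}$, $L(z_{uv})=\{1,2,4\}$; add edges $ux_{uv}$, $uy_{uv}$; and add (each with its own new internal vertices, each of length six) a $(1,2)$-forbidding and a $(3,1)$-forbidding path from $u$ to $x_{uv}$, a $(2,3)$-forbidding path from $u$ to $y_{uv}$, a $(2,1)$-forbidding and a $(3,2)$-forbidding path from $v$ to $x_{uv}$, a $(1,3)$-forbidding path from $v$ to $y_{uv}$, a $(4,1)$-forbidding path from $x_{uv}$ to $z_{uv}$, and a $(4,2)$-forbidding path from $y_{uv}$ to $z_{uv}$. Let $Z=\{z_{uv}\mid uv\in E(G)\}$. Add vertices $a,b,c,d$ with $\alpha(a)=1,\alpha(b)=2,\alpha(c)=3,\alpha(d)=4$, $L(a)=\{1,2,3\}$, $L(b)=\{1,2\}$, $L(c)=\{3,4\}$, $L(d)=\{4\}$, all edges among $a,b,c,d$ except $cd$, and edges from every vertex of $Z$ to $c$. Extend $\alpha$ arbitrarily to an $L$-coloring of all internal vertices of the forbidding paths (possible since the end colors are admissible). Set $\beta(w)=\alpha(w)$ for all $w\ne a,b$, $\beta(a)=2$, $\beta(b)=1$. *)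

theory Defs
  imports Main
begin

text \<open>A path with vertices at positions 0..n (consecutive positions adjacent), with
  list assignment Ls.  Position 0 is the end vertex u, position n the end vertex v.\<close>

definition path_col :: "nat \<Rightarrow> (nat \<Rightarrow> nat set) \<Rightarrow> (nat \<Rightarrow> nat) \<Rightarrow> bool" where
  "path_col n Ls g \<longleftrightarrow> (\<forall>i\<le>n. g i \<in> Ls i) \<and> (\<forall>i<n. g i \<noteq> g (Suc i))"

definition path_recol_seq :: "nat \<Rightarrow> (nat \<Rightarrow> nat set) \<Rightarrow> (nat \<Rightarrow> nat) list \<Rightarrow> bool" where
  "path_recol_seq n Ls cs \<longleftrightarrow> cs \<noteq> [] \<and> (\<forall>c\<in>set cs. path_col n Ls c) \<and>
     (\<forall>j. Suc j < length cs \<longrightarrow> card {i. i \<le> n \<and> (cs!j) i \<noteq> (cs!Suc j) i} \<le> 1)"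

definition forbidding :: "nat \<Rightarrow> (nat \<Rightarrow> nat set) \<Rightarrow> nat \<Rightarrow> nat \<Rightarrow> bool" where
  "forbidding n Ls a b \<longleftrightarrow>
     (\<forall>i\<le>n. Ls i \<subseteq> {1,2,3,4}) \<and>
     (\<forall>x\<in>Ls 0. \<forall>y\<in>Ls n.
        (\<exists>g. path_col n Ls g \<and> g 0 = x \<and> g n = y) \<longleftrightarrow> (x \<noteq> a \<or> y \<noteq> b)) \<and>
     (\<forall>g x y. path_col n Ls g \<and> x \<in> Ls 0 \<and> y \<in> Ls n \<and> (x \<noteq> a \<or> y \<noteq> b) \<and>
        (x = g 0 \<or> y = g n) \<longrightarrow>
        (\<exists>cs. path_recol_seq n Ls cs \<and> (\<forall>i\<le>n. hd cs i = g i) \<and>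
              last cs 0 = x \<and> last cs n = y \<and>
              (\<forall>i. 0 < i \<and> i < n \<longrightarrow>
                  card {j. Suc j < length cs \<and> (cs!j) i \<noteq> (cs!Suc j) i} \<le> 1) \<and>
              (\<forall>j. j < length cs - 1 \<longrightarrow> (cs!j) 0 = g 0 \<and> (cs!j) n = g n)))"

text \<open>Vertices of G': original vertices, x_e, y_e, z_e for each oriented edge e,
  a, b, c, d, and internal vertex number i (1..5) of the k-th (0..7) forbidding path of e.\<close>
datatype 'a vtx = Orig 'a | Xv "'a \<times> 'a" | Yv "'a \<times> 'a" | Zv "'a \<times> 'a"
  | Av | Bv | Cv | Dv | Iv "'a \<times> 'a" nat nat

text \<open>The eight forbidding paths of an oriented edge e = (u,v):
  0: (1,2) u to x;  1: (3,1) u to x;  2: (2,3) u to y;  3: (2,1) v to x;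
  4: (3,2) v to x;  5: (1,3) v to y;  6: (4,1) x to z;  7: (4,2) y to z.\<close>
definition path_start :: "'a \<times> 'a \<Rightarrow> nat \<Rightarrow> 'a vtx" where
  "path_start e k = (if k < 3 then Orig (fst e) else if k < 6 then Orig (snd e)
                     else if k = 6 then Xv e else Yv e)"

definition path_end :: "'a \<times> 'a \<Rightarrow> nat \<Rightarrow> 'a vtx" where
  "path_end e k = (if k \<in> {0,1,3,4} then Xv e else if k \<in> {2,5} then Yv e else Zv e)"

definition forb_a :: "nat \<Rightarrow> nat" where "forb_a k = [1,3,2,2,3,1,4,4] ! k"
definition forb_b :: "nat \<Rightarrow> nat" where "forb_b k = [2,1,3,1,2,3,1,2] ! k"

definition pvert :: "'a \<times> 'a \<Rightarrow> nat \<Rightarrow> nat \<Rightarrow> 'a vtx" where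
  "pvert e k i = (if i = 0 then path_start e k else if i = 6 then path_end e k else Iv e k i)"

definition Gvert :: "'a set \<Rightarrow> ('a \<times> 'a) set \<Rightarrow> 'a vtx set" where
  "Gvert V Ori = Orig ` V \<union> Xv ` Ori \<union> Yv ` Ori \<union> Zv ` Ori \<union>
     {Iv e k i | e k i. e \<in> Ori \<and> k < 8 \<and> 1 \<le> i \<and> i \<le> 5} \<union> {Av, Bv, Cv, Dv}"

definition Glist :: "('a \<times> 'a \<Rightarrow> nat \<Rightarrow> nat \<Rightarrow> nat set) \<Rightarrow> 'a vtx \<Rightarrow> nat set" where
  "Glist Lint w = (case w of Orig _ \<Rightarrow> {1,2,3} | Xv _ \<Rightarrow> {1,2,4} | Yv _ \<Rightarrow> {3,4}
     | Zv _ \<Rightarrow> {1,2,4} | Av \<Rightarrow> {1,2,3} | Bv \<Rightarrow> {1,2} | Cv \<Rightarrow> {3,4} | Dv \<Rightarrow> {4}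
     | Iv e k i \<Rightarrow> Lint e k i)"

definition Gadj0 :: "('a \<times> 'a) set \<Rightarrow> 'a vtx \<Rightarrow> 'a vtx \<Rightarrow> bool" where
  "Gadj0 Ori w w' \<longleftrightarrow>
     (\<exists>e\<in>Ori. w = Orig (fst e) \<and> (w' = Xv e \<or> w' = Yv e)) \<or>
     (\<exists>e\<in>Ori. \<exists>k<8. \<exists>i<6. w = pvert e k i \<and> w' = pvert e k (Suc i)) \<or>
     (\<exists>e\<in>Ori. w = Zv e \<and> w' = Cv) \<or>
     (w, w') \<in> {(Av, Bv), (Av, Cv), (Av, Dv), (Bv, Cv), (Bv, Dv)}"

definition Gadj :: "('a \<times> 'a) set \<Rightarrow> 'a vtx \<Rightarrow> 'a vtx \<Rightarrow> bool" where
  "Gadj Ori w w' \<longleftrightarrow> Gadj0 Ori w w' \<or> Gadj0 Ori w' w"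

definition Lcoloring :: "'v set \<Rightarrow> ('v \<Rightarrow> 'v \<Rightarrow> bool) \<Rightarrow> ('v \<Rightarrow> nat set) \<Rightarrow> ('v \<Rightarrow> nat) \<Rightarrow> bool" where
  "Lcoloring W adj L g \<longleftrightarrow> (\<forall>w\<in>W. g w \<in> L w) \<and>
     (\<forall>w\<in>W. \<forall>w'\<in>W. adj w w' \<longrightarrow> g w \<noteq> g w')"

definition Lrecoloring_seq :: "'v set \<Rightarrow> ('v \<Rightarrow> 'v \<Rightarrow> bool) \<Rightarrow> ('v \<Rightarrow> nat set) \<Rightarrow>
    ('v \<Rightarrow> nat) \<Rightarrow> ('v \<Rightarrow> nat) \<Rightarrow> ('v \<Rightarrow> nat) list \<Rightarrow> bool" where
  "Lrecoloring_seq W adj L g h cs \<longleftrightarrow> cs \<noteq> [] \<and>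
     (\<forall>c\<in>set cs. Lcoloring W adj L c) \<and>
     (\<forall>w\<in>W. hd cs w = g w) \<and> (\<forall>w\<in>W. last cs w = h w) \<and>
     (\<forall>j. Suc j < length cs \<longrightarrow> card {w\<in>W. (cs!j) w \<noteq> (cs!Suc j) w} \<le> 1)"

definition three_colorable :: "'a set \<Rightarrow> ('a \<Rightarrow> 'a \<Rightarrow> bool) \<Rightarrow> bool" where
  "three_colorable V E \<longleftrightarrow> (\<exists>c. (\<forall>v\<in>V. c v \<in> {1::nat,2,3}) \<and>
     (\<forall>u\<in>V. \<forall>v\<in>V. E u v \<longrightarrow> c u \<noteq> c v))"

end

theory Submission
  imports Defs
begin

lemma fin_Gvert:
  assumes "finite V" and "Ori \<subseteq> V \<times> V"
  shows "finite (Gvert V Ori)"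
proof -
  have fO: "finite Ori" using assms finite_subset by blast
  have "{Iv e k i | e k i. e \<in> Ori \<and> k < 8 \<and> 1 \<le> i \<and> i \<le> 5}
        \<subseteq> (\<lambda>(e,k,i). Iv e k i) ` (Ori \<times> {..<(8::nat)} \<times> {1..(5::nat)})"
    by force
  moreover have "finite ((\<lambda>(e,k,i). Iv e k i) ` (Ori \<times> {..<(8::nat)} \<times> {1..(5::nat)}))"
    using fO by auto
  ultimately have "finite {Iv e k i | e k i. e \<in> Ori \<and> k < 8 \<and> 1 \<le> i \<and> i \<le> 5}"
    using finite_subset by blast
  thus ?thesis using assms fO unfolding Gvert_def by auto
qed

lemma pvert_in:
  assumes "e \<in> Ori" "fst e \<in> V" "snd e \<in> V" "k < 8" "i \<le> 6"
  shows "pvert e k i \<in> Gvert V Ori"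
proof -
  have Iv: "{Iv e k i | e k i. e \<in> Ori \<and> k < 8 \<and> 1 \<le> i \<and> i \<le> 5} \<subseteq> Gvert V Ori"
    unfolding Gvert_def by blast
  show ?thesis
  proof (cases "i = 0")
    case True then show ?thesis using assms unfolding pvert_def path_start_def Gvert_def by auto
  next
    case f0: False
    show ?thesis
    proof (cases "i = 6")
      case True then show ?thesis using assms unfolding pvert_def path_end_def Gvert_def by auto
    next
      case False
      then have "pvert e k i = Iv e k i" using f0 by (simp add: pvert_def)
      moreover have "Iv e k i \<in> {Iv e k i | e k i. e \<in> Ori \<and> k < 8 \<and> 1 \<le> i \<and> i \<le> 5}"
      proof -
        have "1 \<le> i" "i \<le> 5" using f0 False assms(5) by auto
        then show ?thesis using assms(1,4) by blast
      qed
      ultimately show ?thesis using Iv by auto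
    qed
  qed
qed

theorem mainTheorem8:
  fixes V :: "'a set" and E :: "'a \<Rightarrow> 'a \<Rightarrow> bool"
    and Ori :: "('a \<times> 'a) set"
    and Lint :: "'a \<times> 'a \<Rightarrow> nat \<Rightarrow> nat \<Rightarrow> nat set"
    and \<alpha> :: "'a vtx \<Rightarrow> nat"
  assumes finV: "finite V"
    and E_in: "\<And>u v. E u v \<Longrightarrow> u \<in> V \<and> v \<in> V"
    and E_sym: "\<And>u v. E u v \<Longrightarrow> E v u"
    and E_irr: "\<And>u. \<not> E u u"
    and O_sub: "\<And>u v. (u, v) \<in> Ori \<Longrightarrow> E u v"
    and O_tot: "\<And>u v. E u v \<Longrightarrow> (u, v) \<in> Ori \<or> (v, u) \<in> Ori"
    and O_asym: "\<And>u v. (u, v) \<in> Ori \<Longrightarrow> (v, u) \<notin> Ori"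
    and forb: "\<And>e k. e \<in> Ori \<Longrightarrow> k < 8 \<Longrightarrow>
       forbidding 6 (\<lambda>i. Glist Lint (pvert e k i)) (forb_a k) (forb_b k)"
    and alpha_col: "Lcoloring (Gvert V Ori) (Gadj Ori) (Glist Lint) \<alpha>"
    and alpha_orig: "\<And>u. u \<in> V \<Longrightarrow> \<alpha> (Orig u) = 1"
    and alpha_xyz: "\<And>e. e \<in> Ori \<Longrightarrow> \<alpha> (Xv e) = 4 \<and> \<alpha> (Yv e) = 4 \<and> \<alpha> (Zv e) = 4"
    and alpha_abcd: "\<alpha> Av = 1" "\<alpha> Bv = 2" "\<alpha> Cv = 3" "\<alpha> Dv = 4"
    and reconf: "\<exists>cs. Lrecoloring_seq (Gvert V Ori) (Gadj Ori) (Glist Lint)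
                    \<alpha> (\<alpha>(Av := 2, Bv := 1)) cs"
  shows "three_colorable V E"
proof -
  define W where "W = Gvert V Ori"
  have OV: "Ori \<subseteq> V \<times> V" using O_sub E_in by auto
  have finW: "finite W" unfolding W_def using fin_Gvert[OF finV OV] .
  have ABCW: "Av \<in> W" "Bv \<in> W" "Cv \<in> W" unfolding W_def Gvert_def by auto
  have adjAB: "Gadj Ori Av Bv" "Gadj Ori Av Cv" unfolding Gadj_def Gadj0_def by auto
  obtain cs where R: "Lrecoloring_seq W (Gadj Ori) (Glist Lint) \<alpha> (\<alpha>(Av := 2, Bv := 1)) cs"
    using reconf W_def by auto
  have ne: "cs \<noteq> []" and colall: "\<forall>c\<in>set cs. Lcoloring W (Gadj Ori) (Glist Lint) c"
    and hdc: "\<forall>w\<in>W. hd cs w = \<alpha> w" and lastc: "\<forall>w\<in>W. last cs w = (\<alpha>(Av := 2, Bv := 1)) w"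
    and stp: "\<forall>j. Suc j < length cs \<longrightarrow> card {w\<in>W. (cs!j) w \<noteq> (cs!Suc j) w} \<le> 1"
    using R unfolding Lrecoloring_seq_def by auto
  have colj: "\<And>j. j < length cs \<Longrightarrow> Lcoloring W (Gadj Ori) (Glist Lint) (cs!j)"
    using colall nth_mem by blast
  have "\<exists>j<length cs. (cs!j) Av = 3"
  proof (rule ccontr)
    assume nA: "\<not> ?thesis"
    have "\<forall>j. j < length cs \<longrightarrow> (cs!j) Av = 1"
    proof
      fix j show "j < length cs \<longrightarrow> (cs!j) Av = 1"
      proof (induction j)
        case 0
        then show ?case using hdc ABCW alpha_abcd ne by (simp add: hd_conv_nth)
      next
        case (Suc j)
        show ?case
        proof
          assume lt: "Suc j < length cs"
          have c0: "(cs!j) Av = 1" using Suc lt by simp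
          have L0: "Lcoloring W (Gadj Ori) (Glist Lint) (cs!j)" using colj lt by simp
          have L1: "Lcoloring W (Gadj Ori) (Glist Lint) (cs!Suc j)" using colj lt by simp
          show "(cs!Suc j) Av = 1"
          proof (rule ccontr)
            assume c1: "(cs!Suc j) Av \<noteq> 1"
            have a1: "(cs!Suc j) Av = 2"
              using L1 ABCW c1 nA lt unfolding Lcoloring_def Glist_def by fastforce
            have b1: "(cs!Suc j) Bv = 1"
              using L1 ABCW a1 adjAB unfolding Lcoloring_def Glist_def by fastforce
            have b0: "(cs!j) Bv = 2"
              using L0 ABCW c0 adjAB unfolding Lcoloring_def Glist_def by fastforce
            have sub: "{Av, Bv} \<subseteq> {w\<in>W. (cs!j) w \<noteq> (cs!Suc j) w}"
              using ABCW a1 b1 b0 c0 by auto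
            have "card {Av, Bv} \<le> card {w\<in>W. (cs!j) w \<noteq> (cs!Suc j) w}"
              using card_mono[OF _ sub] finW by auto
            then show False using stp lt by fastforce
          qed
        qed
      qed
    qed
    then have "(cs!(length cs - 1)) Av = 1" using ne by simp
    moreover have "last cs Av = 2" using lastc ABCW by simp
    ultimately show False using ne by (simp add: last_conv_nth)
  qed
  then obtain j where jl: "j < length cs" and cA: "(cs!j) Av = 3" by blast
  define c where "c = cs!j"
  have Lc: "Lcoloring W (Gadj Ori) (Glist Lint) c" using colj jl c_def by simp
  have inL: "\<And>w. w \<in> W \<Longrightarrow> c w \<in> Glist Lint w" using Lc unfolding Lcoloring_def by auto
  have neq: "\<And>w w'. w \<in> W \<Longrightarrow> w' \<in> W \<Longrightarrow> Gadj Ori w w' \<Longrightarrow> c w \<noteq> c w'"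
    using Lc unfolding Lcoloring_def by auto
  have cC: "c Cv = 4"
    using inL[OF ABCW(3)] neq[OF ABCW(1) ABCW(3) adjAB(2)] cA c_def
    by (auto simp: Glist_def)
  have pin: "\<And>e k i. e \<in> Ori \<Longrightarrow> k < 8 \<Longrightarrow> i \<le> 6 \<Longrightarrow> pvert e k i \<in> W"
    unfolding W_def using pvert_in OV by (metis mem_Sigma_iff prod.collapse subsetD)
  have key: "\<And>e k. e \<in> Ori \<Longrightarrow> k < 8 \<Longrightarrow>
      \<not> (c (pvert e k 0) = forb_a k \<and> c (pvert e k 6) = forb_b k)"
  proof
    fix e k assume e: "e \<in> Ori" and k: "k < 8"
      and h: "c (pvert e k 0) = forb_a k \<and> c (pvert e k 6) = forb_b k"
    let ?Ls = "\<lambda>i. Glist Lint (pvert e k i)"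
    let ?g = "\<lambda>i. c (pvert e k i)"
    have F: "forbidding 6 ?Ls (forb_a k) (forb_b k)" using forb e k .
    have pc: "path_col 6 ?Ls ?g"
      unfolding path_col_def
    proof (intro conjI allI impI)
      fix i assume "i \<le> (6::nat)" thus "?g i \<in> ?Ls i" using inL pin e k by auto
    next
      fix i assume "i < (6::nat)"
      moreover have "Gadj Ori (pvert e k i) (pvert e k (Suc i))"
        unfolding Gadj_def Gadj0_def using e k \<open>i < 6\<close> by blast
      ultimately show "?g i \<noteq> ?g (Suc i)" using neq pin e k by auto
    qed
    have x: "forb_a k \<in> ?Ls 0" using h inL pin e k by (metis le0)
    have y: "forb_b k \<in> ?Ls 6" using h inL pin e k by (metis order_refl)
    from F have "(\<exists>g. path_col 6 ?Ls g \<and> g 0 = forb_a k \<and> g 6 = forb_b k)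
        \<longleftrightarrow> (forb_a k \<noteq> forb_a k \<or> forb_b k \<noteq> forb_b k)"
      using x y unfolding forbidding_def by blast
    then show False using pc h by auto
  qed
  have edge: "\<And>u v. (u, v) \<in> Ori \<Longrightarrow> c (Orig u) \<noteq> c (Orig v)"
  proof -
    fix u v assume e: "(u, v) \<in> Ori"
    let ?e = "(u,v)"
    have uv: "u \<in> V" "v \<in> V" using e OV by auto
    have W1: "Orig u \<in> W" "Orig v \<in> W" "Xv ?e \<in> W" "Yv ?e \<in> W" "Zv ?e \<in> W"
      unfolding W_def Gvert_def using uv e by auto
    have U: "c (Orig u) \<in> {1,2,3}" using inL[OF W1(1)] by (simp add: Glist_def)
    have Vv: "c (Orig v) \<in> {1,2,3}" using inL[OF W1(2)] by (simp add: Glist_def)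
    have X: "c (Xv ?e) \<in> {1,2,4}" using inL[OF W1(3)] by (simp add: Glist_def)
    have Y: "c (Yv ?e) \<in> {3,4}" using inL[OF W1(4)] by (simp add: Glist_def)
    have Z0: "c (Zv ?e) \<in> {1,2,4}" using inL[OF W1(5)] by (simp add: Glist_def)
    have "Gadj Ori (Zv ?e) Cv" unfolding Gadj_def Gadj0_def using e by blast
    then have "c (Zv ?e) \<noteq> 4" using neq W1 ABCW cC by fastforce
    then have Z: "c (Zv ?e) \<in> {1,2}" using Z0 by auto
    have ux: "c (Orig u) \<noteq> c (Xv ?e)" "c (Orig u) \<noteq> c (Yv ?e)"
      using neq W1 e unfolding Gadj_def Gadj0_def by (metis fst_conv)+
    have k0: "\<not> (c (Orig u) = 1 \<and> c (Xv ?e) = 2)" using key[OF e, of 0]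
      by (simp add: pvert_def path_start_def path_end_def forb_a_def forb_b_def)
    have k1: "\<not> (c (Orig u) = 3 \<and> c (Xv ?e) = 1)" using key[OF e, of 1]
      by (simp add: pvert_def path_start_def path_end_def forb_a_def forb_b_def)
    have k2: "\<not> (c (Orig u) = 2 \<and> c (Yv ?e) = 3)" using key[OF e, of 2]
      by (simp add: pvert_def path_start_def path_end_def forb_a_def forb_b_def)
    have k3: "\<not> (c (Orig v) = 2 \<and> c (Xv ?e) = 1)" using key[OF e, of 3]
      by (simp add: pvert_def path_start_def path_end_def forb_a_def forb_b_def)
    have k4: "\<not> (c (Orig v) = 3 \<and> c (Xv ?e) = 2)" using key[OF e, of 4]
      by (simp add: pvert_def path_start_def path_end_def forb_a_def forb_b_def)
    have k5: "\<not> (c (Orig v) = 1 \<and> c (Yv ?e) = 3)" using key[OF e, of 5]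
      by (simp add: pvert_def path_start_def path_end_def forb_a_def forb_b_def)
    have k6: "\<not> (c (Xv ?e) = 4 \<and> c (Zv ?e) = 1)" using key[OF e, of 6]
      by (simp add: pvert_def path_start_def path_end_def forb_a_def forb_b_def)
    have k7: "\<not> (c (Yv ?e) = 4 \<and> c (Zv ?e) = 2)" using key[OF e, of 7]
      by (simp add: pvert_def path_start_def path_end_def forb_a_def forb_b_def)
    show "c (Orig u) \<noteq> c (Orig v)"
      using U Vv X Y Z ux k0 k1 k2 k3 k4 k5 k6 k7 by auto
  qed
  show ?thesis unfolding three_colorable_def
  proof (intro exI[of _ "\<lambda>u. c (Orig u)"] conjI ballI impI)
    fix v assume "v \<in> V"
    then have "Orig v \<in> W" unfolding W_def Gvert_def by auto
    then show "c (Orig v) \<in> {1,2,3}" using inL[of "Orig v"] by (simp add: Glist_def)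
  next
    fix u v assume "u \<in> V" "v \<in> V" "E u v"
    then show "c (Orig u) \<noteq> c (Orig v)" using O_tot edge by metis
  qed
qed

end
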